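(* Let $\Omega\subset\mathbb{C}$ be a domain, $p>0$, and let $\overline D_n\subset\Omega$, $n=1,2,\dots,\mathcal N$ ($\mathcal N$ finite or infinite), be closed discs of radius $R>0$, where if $\mathcal N=\infty$ there exists $N$ such that the $\overline D_n$ are pairwise disjoint for $n>N$. Then $$\mathcal A(\Omega)\cap\mathcal A_p\Big(\Omega\setminus\bigcup_{n=1}^{\mathcal N}\overline D_n\Big)\subset\mathcal A_p(\Omega).$$
   Context: For a domain (open set) $\Omega'\subset\mathbb{C}$, $\mathcal A(\Omega')$ is the algebra of holomorphic functions on $\Omega'$, and for $p>0$, $\mathcal A_p(\Omega')=\{f\in\mathcal A(\Omega'):\exists\,c,M>0\text{ with }|f(\lambda)|\le Me^{c|\lambda|^p}\text{ for all }\lambda\in\Omega'\}$. The statement means: if $f$ is holomorphic on $\Omega$ and satisfies such a bound on $\Omega\setminus\bigcup\overline D_n$, then it satisfies such a bound (with possibly different constants) on all of $\Omega$. *)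

theory Defs
  imports "HOL-Analysis.Analysis"
begin

definition hol_alg :: "complex set \<Rightarrow> (complex \<Rightarrow> complex) set" where
  "hol_alg S = {f. f holomorphic_on S}"

definition Ap_alg :: "real \<Rightarrow> complex set \<Rightarrow> (complex \<Rightarrow> complex) set" where
  "Ap_alg p S = {f. f holomorphic_on S \<and>
     (\<exists>c M. c > 0 \<and> M > 0 \<and> (\<forall>z\<in>S. norm (f z) \<le> M * exp (c * norm z powr p)))}"

end

theory Submission
  imports Defs "HOL-Complex_Analysis.Conformal_Mappings"
begin

lemma locfin:
  fixes ctr :: "nat \<Rightarrow> complex"
  assumes R: "R > 0" and disj: "\<forall>n\<in>T. \<forall>m\<in>T. n \<noteq> m \<longrightarrow> cball (ctr n) R \<inter> cball (ctr m) R = {}"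
  shows "finite {m\<in>T. cball (ctr m) R \<inter> ball w 1 \<noteq> {}}"
proof (rule ccontr)
  let ?T = "{m\<in>T. cball (ctr m) R \<inter> ball w 1 \<noteq> {}}"
  assume inf: "infinite ?T"
  have inj: "inj_on ctr ?T"
  proof (rule inj_onI)
    fix m m' assume a: "m \<in> ?T" "m' \<in> ?T" "ctr m = ctr m'"
    show "m = m'"
    proof (rule ccontr)
      assume "m \<noteq> m'"
      moreover have "m \<in> T" "m' \<in> T" using a by auto
      ultimately have "cball (ctr m) R \<inter> cball (ctr m') R = {}" using disj by blast
      moreover have "ctr m \<in> cball (ctr m) R \<inter> cball (ctr m') R" using a R by auto
      ultimately show False by blast
    qed
  qed
  have inf2: "infinite (ctr ` ?T)" using inf inj finite_imageD by blast
  have sub: "ctr ` ?T \<subseteq> cball w (R+1)"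
  proof
    fix y assume "y \<in> ctr ` ?T"
    then obtain m where m: "m \<in> ?T" "y = ctr m" by auto
    then obtain u where u: "u \<in> cball (ctr m) R" "u \<in> ball w 1" by auto
    have "dist w y \<le> dist w u + dist u y" by (rule dist_triangle)
    then show "y \<in> cball w (R+1)" using m u by (auto simp: dist_commute)
  qed
  obtain x where "x islimpt ctr ` ?T" using Heine_Borel_imp_Bolzano_Weierstrass[OF compact_cball inf2 sub] by blast
  then have ap: "\<forall>e>0. \<exists>x'\<in>ctr ` ?T. x' \<noteq> x \<and> dist x' x < e" by (simp add: islimpt_approachable)
  obtain y1 where y1: "y1 \<in> ctr ` ?T" "y1 \<noteq> x" "dist y1 x < R" using ap R by blast
  have "dist y1 x > 0" using y1 by simp
  then obtain y2 where y2: "y2 \<in> ctr ` ?T" "y2 \<noteq> x" "dist y2 x < dist y1 x" using ap by blast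
  obtain m1 m2 where m: "m1 \<in> ?T" "m2 \<in> ?T" "y1 = ctr m1" "y2 = ctr m2" using y1 y2 by auto
  have ne: "m1 \<noteq> m2" using m y2 by force
  have "dist y1 y2 \<le> dist y1 x + dist y2 x" using dist_triangle[of y1 y2 x] by (simp add: dist_commute)
  then have d: "dist y1 y2 < 2*R" using y1 y2 by simp
  define q where "q = (y1 + y2)/2"
  have e1: "dist y1 q = dist y1 y2 / 2" proof -
    have "y1 - q = (y1 - y2)/2" unfolding q_def by (simp add: field_simps)
    then have "dist y1 q = norm ((y1 - y2)/2)" by (simp only: dist_norm)
    then show ?thesis by (simp add: dist_norm norm_divide)
  qed
  have e2: "dist y2 q = dist y1 y2 / 2" proof -
    have "y2 - q = -(y1 - y2)/2" unfolding q_def by (simp add: field_simps)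
    then have "dist y2 q = norm (-(y1 - y2)/2)" by (simp only: dist_norm)
    then show ?thesis by (simp add: dist_norm norm_divide norm_minus_commute)
  qed
  have "q \<in> cball (ctr m1) R \<inter> cball (ctr m2) R" using e1 e2 d m by (simp add: dist_commute)
  moreover have "cball (ctr m1) R \<inter> cball (ctr m2) R = {}"
    proof -
      have "m1 \<in> T" "m2 \<in> T" using m by auto
      then show ?thesis using disj ne by blast
    qed
  ultimately show False by blast
qed

lemma powr_sum_le:
  fixes a b p :: real
  assumes "a \<ge> 0" "b \<ge> 0" "p > 0"
  shows "(a + b) powr p \<le> 2 powr p * (a powr p + b powr p)"
proof -
  have "(a + b) powr p \<le> (2 * max a b) powr p"
    using assms by (intro powr_mono2) auto
  also have "\<dots> = 2 powr p * max a b powr p" using assms by (simp add: powr_mult)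
  also have "max a b powr p \<le> a powr p + b powr p" by (simp add: max_def)
  finally show ?thesis by simp
qed

theorem proposition7:
  fixes \<Omega> :: "complex set" and p R :: real
    and ctr :: "nat \<Rightarrow> complex" and K :: "nat set"
  assumes "open \<Omega>" and "connected \<Omega>"
    and "p > 0" and "R > 0"
    and "(\<exists>M. K = {1..M}) \<or> K = {1..}"
    and "\<forall>n\<in>K. cball (ctr n) R \<subseteq> \<Omega>"
    and "infinite K \<Longrightarrow> (\<exists>N. \<forall>n\<in>K. \<forall>m\<in>K. N < n \<and> N < m \<and> n \<noteq> m \<longrightarrow>
            cball (ctr n) R \<inter> cball (ctr m) R = {})"
  shows "hol_alg \<Omega> \<inter> Ap_alg p (\<Omega> - (\<Union>n\<in>K. cball (ctr n) R)) \<subseteq> Ap_alg p \<Omega>"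
proof
  fix f assume fA: "f \<in> hol_alg \<Omega> \<inter> Ap_alg p (\<Omega> - (\<Union>n\<in>K. cball (ctr n) R))"
  define S where "S = \<Omega> - (\<Union>n\<in>K. cball (ctr n) R)"
  have hol: "f holomorphic_on \<Omega>" using fA by (simp add: hol_alg_def)
  obtain c M where cM: "c > 0" "M > 0" and bnd: "\<forall>z\<in>S. norm (f z) \<le> M * exp (c * norm z powr p)"
    using fA unfolding S_def Ap_alg_def by blast
  have R: "R > 0" and p: "p > 0" using assms by auto
  have sub\<Omega>: "\<And>n. n \<in> K \<Longrightarrow> cball (ctr n) R \<subseteq> \<Omega>" using assms(6) by blast
  obtain N where disj: "\<forall>n\<in>K. \<forall>m\<in>K. N < n \<and> N < m \<and> n \<noteq> m \<longrightarrow> cball (ctr n) R \<inter> cball (ctr m) R = {}"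
  proof (cases "K = {1..}")
    case True
    then have "infinite K" using infinite_Ici by simp
    then show ?thesis using assms(7) that by blast
  next
    case False
    then obtain M0 where "K = {1..M0}" using assms(5) by blast
    then show ?thesis using that[of M0] by auto
  qed
  have cont: "continuous_on \<Omega> f" using hol holomorphic_on_imp_continuous_on by blast
  define U where "U = (\<Union>n\<in>{n\<in>K. n \<le> N}. cball (ctr n) R)"
  have finN: "finite {n\<in>K. n \<le> N}" by (rule finite_subset[of _ "{..N}"]) auto
  have "compact U" unfolding U_def using finN by (intro compact_UN) auto
  moreover have "U \<subseteq> \<Omega>" unfolding U_def using sub\<Omega> by blast
  ultimately have "compact (f ` U)" using cont by (intro compact_continuous_image continuous_on_subset[OF cont]) auto
  then obtain a where a: "\<forall>x\<in>f ` U. norm x \<le> a" using compact_imp_bounded bounded_iff by metis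
  define C where "C = max a 0"
  have C0: "C \<ge> 0" unfolding C_def by simp
  have CU: "\<And>z. z \<in> U \<Longrightarrow> norm (f z) \<le> C" using a unfolding C_def by force
  have bdry: "norm (f w) \<le> C + M * exp (c * (norm w + 1) powr p)"
    if n: "n \<in> K" "N < n" and w: "w \<in> sphere (ctr n) R" for n w
  proof -
    have w\<Omega>: "w \<in> \<Omega>" using sub\<Omega>[OF n(1)] w by auto
    have wn: "w \<in> cball (ctr n) R" using w by auto
    have Mexp: "M * exp (c * (norm w + 1) powr p) \<ge> 0" using cM by simp
    show ?thesis
    proof (cases "\<exists>m\<in>K. m \<le> N \<and> w \<in> cball (ctr m) R")
      case True
      then have "w \<in> U" unfolding U_def by blast
      then show ?thesis using CU Mexp by fastforce
    next
      case False
      define F where "F = {m\<in>K. m \<noteq> n \<and> cball (ctr m) R \<inter> ball w 1 \<noteq> {}}"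
      have d2: "\<forall>n\<in>{m\<in>K. N<m}. \<forall>m\<in>{m\<in>K. N<m}. n \<noteq> m \<longrightarrow> cball (ctr n) R \<inter> cball (ctr m) R = {}"
        using disj by blast
      have "F \<subseteq> {..N} \<union> {m\<in>{m\<in>K. N<m}. cball (ctr m) R \<inter> ball w 1 \<noteq> {}}"
        unfolding F_def by auto
      then have finF: "finite F" using locfin[OF R d2, of w] finite_subset by blast
      have wF: "w \<notin> (\<Union>m\<in>F. cball (ctr m) R)"
      proof
        assume "w \<in> (\<Union>m\<in>F. cball (ctr m) R)"
        then obtain m where m: "m \<in> F" "w \<in> cball (ctr m) R" by blast
        show False
        proof (cases "m \<le> N")
          case True
          then show False using False m unfolding F_def by blast
        next
          case False
          then have "cball (ctr n) R \<inter> cball (ctr m) R = {}" using disj n m unfolding F_def by auto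
          then show False using m wn by blast
        qed
      qed
      have "closed (\<Union>m\<in>F. cball (ctr m) R)" using finF by (intro closed_UN) auto
      then have "open (- (\<Union>m\<in>F. cball (ctr m) R))" by (simp only: open_Compl)
      then obtain e1 where e1: "e1 > 0" "ball w e1 \<subseteq> - (\<Union>m\<in>F. cball (ctr m) R)"
        using wF open_contains_ball by blast
      obtain e2 where e2: "e2 > 0" "cball w e2 \<subseteq> \<Omega>" using assms(1) w\<Omega> open_contains_cball by blast
      define e where "e = min 1 (min e1 e2)"
      have e: "e > 0" "e \<le> 1" "e \<le> e1" "e \<le> e2" using e1 e2 unfolding e_def by auto
      define s where "s = S \<inter> ball w e"
      have nw: "norm (w - ctr n) = R" using w by (simp add: dist_norm norm_minus_commute)
      have "w \<in> closure s" unfolding closure_approachable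
      proof (intro allI impI)
        fix \<delta> :: real assume \<delta>: "\<delta> > 0"
        define t where "t = min \<delta> e / 2"
        have t: "t > 0" "t < \<delta>" "t < e" using \<delta> e unfolding t_def by auto
        define y where "y = w + of_real (t/R) * (w - ctr n)"
        have "dist y w = norm (of_real (t/R) * (w - ctr n))" unfolding y_def by (simp add: dist_norm)
        also have "\<dots> = t" unfolding norm_mult norm_of_real using nw R t by simp
        finally have dyw: "dist y w = t" .
        have yeq: "y - ctr n = of_real (1 + t/R) * (w - ctr n)" unfolding y_def by (simp add: algebra_simps)
        have "norm (y - ctr n) = norm (of_real (1 + t/R) * (w - ctr n))" by (simp only: yeq)
        also have "\<dots> = (1 + t/R) * R" unfolding norm_mult norm_of_real using nw R t by simp
        also have "\<dots> = R + t" using R by (simp add: field_simps)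
        finally have dyn: "dist (ctr n) y = R + t" by (simp add: dist_norm norm_minus_commute)
        have yb: "y \<in> ball w e" using dyw t by (simp add: dist_commute)
        have y\<Omega>: "y \<in> \<Omega>" using yb e e2 by (auto simp: dist_commute)
        have "y \<notin> cball (ctr m) R" if m: "m \<in> K" for m
        proof (cases "m = n")
          case True then show ?thesis using dyn t by simp
        next
          case mn: False
          show ?thesis
          proof (cases "m \<in> F")
            case True
            have "y \<in> ball w e1" using yb e by auto
            then show ?thesis using e1 True by blast
          next
            case False
            then have "cball (ctr m) R \<inter> ball w 1 = {}" using m mn unfolding F_def by blast
            moreover have "y \<in> ball w 1" using yb e by auto
            ultimately show ?thesis by blast
          qed
        qed
        then have "y \<in> s" unfolding s_def S_def using y\<Omega> yb by blast
        then show "\<exists>y\<in>s. dist y w < \<delta>" using dyw t by auto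
      qed
      moreover have "closure s \<subseteq> cball w e"
        by (rule closure_minimal) (auto simp: s_def)
      then have "closure s \<subseteq> \<Omega>" using e e2 subset_cball[of e e2 w] by blast
      then have "continuous_on (closure s) f" using cont continuous_on_subset by blast
      moreover have "\<forall>y\<in>s. norm (f y) \<le> M * exp (c * (norm w + 1) powr p)"
      proof
        fix y assume y: "y \<in> s"
        then have "norm (f y) \<le> M * exp (c * norm y powr p)" using bnd unfolding s_def by blast
        also have "norm y \<le> norm w + 1"
        proof -
          have "dist w y < e" using y unfolding s_def by auto
          then have "norm (y - w) < 1" using e by (simp add: dist_norm norm_minus_commute)
          then show ?thesis using norm_triangle_ineq2[of y w] by linarith
        qed
        then have "norm y powr p \<le> (norm w + 1) powr p" using p by (intro powr_mono2) auto
        then have "M * exp (c * norm y powr p) \<le> M * exp (c * (norm w + 1) powr p)"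
          using cM by (simp add: mult_left_mono)
        finally show "norm (f y) \<le> M * exp (c * (norm w + 1) powr p)" .
      qed
      ultimately have "norm (f w) \<le> M * exp (c * (norm w + 1) powr p)"
        using continuous_on_closure_norm_le by blast
      then show ?thesis using C0 by linarith
    qed
  qed
  define A where "A = 2*R + 1"
  have A0: "A \<ge> 0" using R unfolding A_def by simp
  have disc: "norm (f z) \<le> C + M * exp (c * (norm z + A) powr p)"
    if n: "n \<in> K" "N < n" and z: "z \<in> cball (ctr n) R" for n z
  proof (rule maximum_modulus_frontier[of f "cball (ctr n) R"])
    show "f holomorphic_on interior (cball (ctr n) R)"
      using holomorphic_on_subset[OF hol order_trans[OF ball_subset_cball sub\<Omega>[OF n(1)]]] by simp
    show "continuous_on (closure (cball (ctr n) R)) f"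
      using cont sub\<Omega>[OF n(1)] by (auto intro: continuous_on_subset)
    show "bounded (cball (ctr n) R)" by simp
    show "z \<in> cball (ctr n) R" by (rule z)
    fix w assume "w \<in> frontier (cball (ctr n) R)"
    then have w: "w \<in> sphere (ctr n) R" by simp
    have "dist z w \<le> dist z (ctr n) + dist (ctr n) w" by (rule dist_triangle)
    then have "dist z w \<le> 2*R" using w z by (simp add: dist_commute)
    then have "norm w \<le> norm z + 2*R" using norm_triangle_ineq2[of w z]
      by (simp add: dist_norm norm_minus_commute)
    then have "(norm w + 1) powr p \<le> (norm z + A) powr p" unfolding A_def using p by (intro powr_mono2) auto
    then have "M * exp (c * (norm w + 1) powr p) \<le> M * exp (c * (norm z + A) powr p)"
      using cM by (simp add: mult_left_mono)
    then show "norm (f w) \<le> C + M * exp (c * (norm z + A) powr p)" using bdry[OF n w] by linarith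
  qed
  define c' where "c' = c * 2 powr p"
  define B where "B = exp (c' * A powr p)"
  define M' where "M' = C + M * B + M"
  have two: "2 powr p \<ge> (1::real)" using p ge_one_powr_ge_zero[of 2 p] by simp
  have B0: "B > 0" unfolding B_def by simp
  have M'pos: "M' > 0" unfolding M'_def using C0 cM B0 by (simp add: add_nonneg_pos)
  have c'pos: "c' > 0" unfolding c'_def using cM by simp
  have "\<forall>z\<in>\<Omega>. norm (f z) \<le> M' * exp (c' * norm z powr p)"
  proof
    fix z assume z\<Omega>: "z \<in> \<Omega>"
    define E where "E = exp (c' * norm z powr p)"
    have E1: "E \<ge> 1" unfolding E_def using c'pos by simp
    have ME: "M * E \<ge> 0" "C * E \<ge> 0" "M * B * E \<ge> 0" using cM E1 C0 B0 by auto
    have CE: "C \<le> C * E" using C0 E1 by (simp add: mult_le_cancel_left1)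
    have eqM: "M' * E = C * E + M * B * E + M * E" unfolding M'_def by (simp add: algebra_simps)
    have "norm (f z) \<le> M' * E"
    proof (cases "z \<in> S")
      case True
      have "c * norm z powr p \<le> c' * norm z powr p" unfolding c'_def
        using cM two by (simp add: mult_right_mono)
      then have "M * exp (c * norm z powr p) \<le> M * E" unfolding E_def using cM by simp
      moreover have "norm (f z) \<le> M * exp (c * norm z powr p)" using bnd True by blast
      ultimately show ?thesis using eqM ME by linarith
    next
      case False
      then obtain m where m: "m \<in> K" "z \<in> cball (ctr m) R" using z\<Omega> unfolding S_def by blast
      show ?thesis
      proof (cases "m \<le> N")
        case True
        then have "z \<in> U" unfolding U_def using m by blast
        then have "norm (f z) \<le> C" using CU by blast
        then show ?thesis using CE eqM ME by linarith
      next
        case False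
        then have fz: "norm (f z) \<le> C + M * exp (c * (norm z + A) powr p)" using disc m by simp
        have "(norm z + A) powr p \<le> 2 powr p * (norm z powr p + A powr p)"
          using powr_sum_le[of "norm z" A p] A0 p by simp
        then have "c * (norm z + A) powr p \<le> c * (2 powr p * (norm z powr p + A powr p))"
          using cM by (intro mult_left_mono) auto
        also have "\<dots> = c' * A powr p + c' * norm z powr p" unfolding c'_def by (simp add: algebra_simps)
        finally have "c * (norm z + A) powr p \<le> c' * A powr p + c' * norm z powr p" .
        then have "exp (c * (norm z + A) powr p) \<le> B * E" unfolding B_def E_def by (simp add: exp_add[symmetric])
        then have "M * exp (c * (norm z + A) powr p) \<le> M * B * E" using cM by (simp add: mult.assoc)
        then show ?thesis using fz CE eqM ME by linarith
      qed
    qed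
    then show "norm (f z) \<le> M' * exp (c' * norm z powr p)" unfolding E_def .
  qed
  then show "f \<in> Ap_alg p \<Omega>" unfolding Ap_alg_def using hol M'pos c'pos by blast
qed

end
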